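(* Let $1\le d<n$, $r=d(n-d)$, and let $\mathfrak C$ be a maximal chain in $I(d,n)$. (i) If $F_t(\mathfrak C)=0$ for each $1\le t\le r-1$, then $\mathfrak C=\mathfrak C_{\mathrm{left}}$. (ii) There exist $t_1,\dots,t_k$ such that $F_{t_1}F_{t_2}\cdots F_{t_k}(\mathfrak C)=\mathfrak C_{\mathrm{left}}$. (iii) If $E_t(\mathfrak C)=0$ for each $1\le t\le r-1$, then $\mathfrak C=\mathfrak C_{\mathrm{right}}$. (iv) There exist $t_1,\dots,t_k$ such that $E_{t_1}E_{t_2}\cdots E_{t_k}(\mathfrak C)=\mathfrak C_{\mathrm{right}}$.
   Context: $I(d,n)$: $d$-subsets of $\{1,\dots,n\}$ as increasing sequences, ordered by $\underline i\le\underline j$ iff $i_k\le j_k$ for all $k$. Maximal chains $\underline i_r>\cdots>\underline i_0$ are compared lexicographically via concatenated strings; $\mathfrak C_{\mathrm{right}}$ is the smallest and $\mathfrak C_{\mathrm{left}}$ the largest. For $1\le t\le r-1$: if the Bruhat interval $[\underline i_{t-1},\underline i_{t+1}]$ has 4 elements $\{\underline i_{t-1},\underline i_t,\underline i'_t,\underline i_{t+1}\}$, then $\underline i_t$ is a right peak if $\underline i'_t>_{lex}\underline i_t$ and a left peak if $\underline i_t>_{lex}\underline i'_t$. $F_t(\mathfrak C)$ (resp. $E_t(\mathfrak C)$) is the chain obtained by replacing $\underline i_t$ by $\underline i'_t$ if $\underline i_t$ is a right (resp. left) peak, and $0$ otherwise; $F_t(0)=E_t(0)=0$. *)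

theory Defs
  imports Main
begin

text \<open>Elements of I(d,n): d-subsets of {1..n} as strictly increasing lists.\<close>
definition Idn :: "nat \<Rightarrow> nat \<Rightarrow> nat list set" where
  "Idn d n = {xs. length xs = d \<and> sorted_wrt (<) xs \<and> set xs \<subseteq> {1..n}}"

definition bru_le :: "nat list \<Rightarrow> nat list \<Rightarrow> bool" where
  "bru_le xs ys \<longleftrightarrow> list_all2 (\<le>) xs ys"

definition bru_less :: "nat list \<Rightarrow> nat list \<Rightarrow> bool" where
  "bru_less xs ys \<longleftrightarrow> bru_le xs ys \<and> xs \<noteq> ys"

text \<open>A maximal chain, listed increasingly: ch ! t is i_t, so ch = [i_0, ..., i_r].
  Its underlying set is a chain of I(d,n) not contained in any larger chain.\<close>
definition max_chain :: "nat \<Rightarrow> nat \<Rightarrow> nat list list \<Rightarrow> bool" where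
  "max_chain d n ch \<longleftrightarrow>
     set ch \<subseteq> Idn d n \<and> sorted_wrt bru_less ch \<and>
     (\<forall>x\<in>Idn d n. (\<forall>y\<in>set ch. bru_le x y \<or> bru_le y x) \<longrightarrow> x \<in> set ch)"

definition bru_interval :: "nat \<Rightarrow> nat \<Rightarrow> nat list \<Rightarrow> nat list \<Rightarrow> nat list set" where
  "bru_interval d n a b = {x \<in> Idn d n. bru_le a x \<and> bru_le x b}"

definition lex_less :: "nat list \<Rightarrow> nat list \<Rightarrow> bool" where
  "lex_less xs ys \<longleftrightarrow> (xs, ys) \<in> lexord {(a, b). a < b}"

definition chain_string :: "nat list list \<Rightarrow> nat list" where
  "chain_string ch = concat (rev ch)"

text \<open>The fourth element i'_t of the interval [i_{t-1}, i_{t+1}].\<close>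
definition other_elt :: "nat \<Rightarrow> nat \<Rightarrow> nat list list \<Rightarrow> nat \<Rightarrow> nat list" where
  "other_elt d n ch t = (THE x. x \<in> bru_interval d n (ch ! (t - 1)) (ch ! (t + 1)) \<and>
                              x \<notin> {ch ! (t - 1), ch ! t, ch ! (t + 1)})"

definition has_diamond :: "nat \<Rightarrow> nat \<Rightarrow> nat list list \<Rightarrow> nat \<Rightarrow> bool" where
  "has_diamond d n ch t \<longleftrightarrow> 1 \<le> t \<and> t + 1 < length ch \<and>
     card (bru_interval d n (ch ! (t - 1)) (ch ! (t + 1))) = 4"

definition right_peak :: "nat \<Rightarrow> nat \<Rightarrow> nat list list \<Rightarrow> nat \<Rightarrow> bool" where
  "right_peak d n ch t \<longleftrightarrow> has_diamond d n ch t \<and> lex_less (ch ! t) (other_elt d n ch t)"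

definition left_peak :: "nat \<Rightarrow> nat \<Rightarrow> nat list list \<Rightarrow> nat \<Rightarrow> bool" where
  "left_peak d n ch t \<longleftrightarrow> has_diamond d n ch t \<and> lex_less (other_elt d n ch t) (ch ! t)"

text \<open>Operators F_t, E_t; None plays the role of 0.\<close>
fun F_op :: "nat \<Rightarrow> nat \<Rightarrow> nat \<Rightarrow> nat list list option \<Rightarrow> nat list list option" where
  "F_op d n t None = None"
| "F_op d n t (Some ch) =
     (if right_peak d n ch t then Some (ch[t := other_elt d n ch t]) else None)"

fun E_op :: "nat \<Rightarrow> nat \<Rightarrow> nat \<Rightarrow> nat list list option \<Rightarrow> nat list list option" where
  "E_op d n t None = None"
| "E_op d n t (Some ch) =
     (if left_peak d n ch t then Some (ch[t := other_elt d n ch t]) else None)"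

definition C_left :: "nat \<Rightarrow> nat \<Rightarrow> nat list list" where
  "C_left d n = (THE ch. max_chain d n ch \<and>
     (\<forall>ch'. max_chain d n ch' \<and> ch' \<noteq> ch \<longrightarrow> lex_less (chain_string ch') (chain_string ch)))"

definition C_right :: "nat \<Rightarrow> nat \<Rightarrow> nat list list" where
  "C_right d n = (THE ch. max_chain d n ch \<and>
     (\<forall>ch'. max_chain d n ch' \<and> ch' \<noteq> ch \<longrightarrow> lex_less (chain_string ch) (chain_string ch')))"

end

theory Submission imports Defs "HOL-Library.List_Lexorder" begin

definition valid :: "nat \<Rightarrow> nat \<Rightarrow> nat list \<Rightarrow> bool" where
  "valid d n xs \<longleftrightarrow> length xs = d \<and> (\<forall>i<d. 1 \<le> xs!i \<and> xs!i \<le> n) \<and> (\<forall>i. Suc i < d \<longrightarrow> xs!i < xs!Suc i)"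

lemma Idn_valid: "xs \<in> Idn d n \<longleftrightarrow> valid d n xs"
proof -
  have "sorted_wrt (<) xs \<longleftrightarrow> (\<forall>i. Suc i < length xs \<longrightarrow> xs!i < xs!Suc i)"
    by (rule sorted_wrt_iff_nth_Suc_transp) (auto simp: transp_def)
  moreover have "set xs \<subseteq> {1..n} \<longleftrightarrow> (\<forall>i<length xs. 1 \<le> xs!i \<and> xs!i \<le> n)"
    by (auto simp: in_set_conv_nth subset_iff)
  ultimately show ?thesis unfolding Idn_def valid_def by auto
qed

lemma bru_le_nth: "bru_le xs ys \<longleftrightarrow> length xs = length ys \<and> (\<forall>i<length xs. xs!i \<le> ys!i)"
  by (simp add: bru_le_def list_all2_conv_all_nth)

lemma bru_le_refl[simp]: "bru_le xs xs"
  by (simp add: bru_le_nth)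

lemma bru_le_trans: "bru_le xs ys \<Longrightarrow> bru_le ys zs \<Longrightarrow> bru_le xs zs"
  unfolding bru_le_nth by (metis le_trans)

lemma bru_le_antisym: "bru_le xs ys \<Longrightarrow> bru_le ys xs \<Longrightarrow> xs = ys"
  unfolding bru_le_def by (metis list_all2_antisym antisym)

lemma valid_mono: "valid d n xs \<Longrightarrow> i \<le> j \<Longrightarrow> j < d \<Longrightarrow> xs!i + (j - i) \<le> xs!j"
proof (induction j)
  case 0 then show ?case by simp
next
  case (Suc j)
  show ?case
  proof (cases "i = Suc j")
    case False
    with Suc have "xs!i + (j - i) \<le> xs!j" by auto
    moreover have "xs!j < xs!Suc j" using Suc.prems unfolding valid_def by auto
    ultimately show ?thesis using False Suc.prems by linarith
  qed simp
qed

lemma valid_lower: "valid d n xs \<Longrightarrow> i < d \<Longrightarrow> Suc i \<le> xs!i"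
proof -
  assume a: "valid d n xs" "i < d"
  then have "xs!0 + i \<le> xs!i" "1 \<le> xs!0" using valid_mono[of d n xs 0 i] unfolding valid_def by auto
  then show ?thesis by auto
qed

lemma valid_upper: "valid d n xs \<Longrightarrow> i < d \<Longrightarrow> xs!i + (d - Suc i) \<le> n"
proof -
  assume a: "valid d n xs" "i < d"
  have "xs!i + (d - 1 - i) \<le> xs!(d-1)" using valid_mono[of d n xs i "d - 1"] a by auto
  moreover have "xs!(d-1) \<le> n" using a unfolding valid_def by auto
  ultimately show ?thesis by auto
qed

definition bot_el :: "nat \<Rightarrow> nat list" where "bot_el d = map Suc [0..<d]"
definition top_el :: "nat \<Rightarrow> nat \<Rightarrow> nat list" where "top_el d n = map (\<lambda>i. Suc i + (n - d)) [0..<d]"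

lemma bot_valid: "d \<le> n \<Longrightarrow> valid d n (bot_el d)"
  by (auto simp: valid_def bot_el_def)
lemma top_valid: "d \<le> n \<Longrightarrow> valid d n (top_el d n)"
  by (auto simp: valid_def top_el_def)

lemma bot_least: "valid d n xs \<Longrightarrow> bru_le (bot_el d) xs"
  using valid_lower[of d n xs] by (auto simp: bru_le_nth bot_el_def valid_def)
lemma top_greatest: "valid d n xs \<Longrightarrow> bru_le xs (top_el d n)"
proof -
  assume a: "valid d n xs"
  { fix i assume "i < d"
    then have "xs!i + (d - Suc i) \<le> n" using valid_upper[OF a] by auto
    then have "xs!i \<le> Suc i + (n - d)" using \<open>i < d\<close> by linarith }
  then show ?thesis using a by (auto simp: bru_le_nth top_el_def valid_def)
qed

lemma sum_top: "sum_list (top_el d n) = sum_list (bot_el d) + d * (n - d)"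
proof -
  have "top_el d n = map (\<lambda>x. x + (n - d)) (bot_el d)" by (simp add: top_el_def bot_el_def)
  moreover have "\<And>xs. sum_list (map (\<lambda>x. x + c) xs) = sum_list xs + length xs * c" for c :: nat
    by (induct_tac xs) auto
  ultimately have "sum_list (top_el d n) = sum_list (bot_el d) + length (bot_el d) * (n - d)"
    by presburger
  then show ?thesis by (simp add: bot_el_def)
qed


definition inc :: "nat list \<Rightarrow> nat \<Rightarrow> nat list" where "inc xs k = xs[k := xs!k + 1]"
definition dec :: "nat list \<Rightarrow> nat \<Rightarrow> nat list" where "dec xs k = xs[k := xs!k - 1]"

lemma dec_inc[simp]: "dec (inc xs k) k = xs"
  by (cases "k < length xs") (auto simp: inc_def dec_def list_update_beyond)

lemma mc_valid: "max_chain d n ch \<Longrightarrow> i < length ch \<Longrightarrow> valid d n (ch!i)"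
  unfolding max_chain_def using Idn_valid nth_mem by blast

lemma mc_less: "max_chain d n ch \<Longrightarrow> i < j \<Longrightarrow> j < length ch \<Longrightarrow> bru_less (ch!i) (ch!j)"
  unfolding max_chain_def using sorted_wrt_nth_less by blast

lemma mc_le: "max_chain d n ch \<Longrightarrow> i \<le> j \<Longrightarrow> j < length ch \<Longrightarrow> bru_le (ch!i) (ch!j)"
  using mc_less[of d n ch i j] by (cases "i = j") (auto simp: bru_less_def)

lemma mc_max: "max_chain d n ch \<Longrightarrow> valid d n x \<Longrightarrow>
   (\<And>j. j < length ch \<Longrightarrow> bru_le x (ch!j) \<or> bru_le (ch!j) x) \<Longrightarrow> \<exists>j<length ch. x = ch!j"
  unfolding max_chain_def Idn_valid[symmetric] by (metis in_set_conv_nth)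

lemma mc_first: assumes "max_chain d n ch" "d \<le> n" shows "ch \<noteq> [] \<and> ch!0 = bot_el d"
proof -
  have "\<exists>j<length ch. bot_el d = ch!j"
    using mc_max[OF assms(1) bot_valid[OF assms(2)]] bot_least mc_valid[OF assms(1)] by blast
  then obtain j where j: "j < length ch" "bot_el d = ch!j" by blast
  have "j = 0"
  proof (rule ccontr)
    assume "j \<noteq> 0"
    then have "bru_less (ch!0) (ch!j)" using mc_less[OF assms(1)] j by auto
    moreover have "bru_le (ch!j) (ch!0)" using j bot_least mc_valid[OF assms(1)] by (metis gr_zeroI less_trans)
    ultimately show False unfolding bru_less_def using bru_le_antisym by blast
  qed
  then show ?thesis using j by auto
qed

lemma mc_last: assumes "max_chain d n ch" "d \<le> n" shows "ch!(length ch - 1) = top_el d n"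
proof -
  have "\<exists>j<length ch. top_el d n = ch!j"
    using mc_max[OF assms(1) top_valid[OF assms(2)]] top_greatest mc_valid[OF assms(1)] by blast
  then obtain j where j: "j < length ch" "top_el d n = ch!j" by blast
  have "j = length ch - 1"
  proof (rule ccontr)
    assume "j \<noteq> length ch - 1"
    then have "bru_less (ch!j) (ch!(length ch - 1))" using mc_less[OF assms(1)] j by auto
    moreover have "bru_le (ch!(length ch - 1)) (ch!j)" using j top_greatest mc_valid[OF assms(1)]
      by (metis diff_less less_nat_zero_code nat_neq_iff zero_less_one)
    ultimately show False unfolding bru_less_def using bru_le_antisym by blast
  qed
  then show ?thesis using j by auto
qed

lemma mc_step: assumes mc: "max_chain d n ch" and t: "t + 1 < length ch"
  shows "\<exists>k<d. ch!(t+1) = inc (ch!t) k"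
proof -
  define a b where "a = ch!t" and "b = ch!(t+1)"
  have va: "valid d n a" and vb: "valid d n b" using mc_valid[OF mc] t a_def b_def by auto
  have ab: "bru_less a b" using mc_less[OF mc, of t "t+1"] t a_def b_def by auto
  then have le: "\<And>i. i < d \<Longrightarrow> a!i \<le> b!i" using va unfolding bru_less_def bru_le_nth valid_def by auto
  define K where "K = {i. i < d \<and> a!i < b!i}"
  have "K \<noteq> {}"
  proof
    assume "K = {}"
    then have "a = b" using le va vb unfolding K_def valid_def
      by (metis (mono_tags, lifting) empty_Collect_eq le_neq_implies_less nth_equalityI)
    then show False using ab unfolding bru_less_def by auto
  qed
  moreover have fK: "finite K" unfolding K_def by auto
  ultimately have kK: "Max K \<in> K" by auto
  define k where "k = Max K"
  have kd: "k < d" and akb: "a!k < b!k" using kK k_def K_def by auto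
  have above: "\<And>i. k < i \<Longrightarrow> i < d \<Longrightarrow> a!i = b!i"
  proof -
    fix i assume "k < i" "i < d"
    then have "i \<notin> K" using Max_ge[OF fK] k_def by force
    then show "a!i = b!i" using le \<open>i < d\<close> K_def by force
  qed
  define x where "x = inc a k"
  have lx: "length x = d" using va x_def inc_def valid_def by auto
  have xk: "x!k = a!k + 1" using kd va x_def inc_def valid_def by auto
  have xi: "\<And>i. i \<noteq> k \<Longrightarrow> x!i = a!i" using x_def inc_def by auto
  have B: "\<forall>i<d. 1 \<le> x!i \<and> x!i \<le> n"
  proof (intro allI impI)
    fix i assume "i < d"
    show "1 \<le> x!i \<and> x!i \<le> n"
    proof (cases "i = k")
      case True
      then have "b!k \<le> n" using vb \<open>i < d\<close> unfolding valid_def by auto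
      then show ?thesis using True xk akb by auto
    next
      case False
      then show ?thesis using xi va \<open>i < d\<close> unfolding valid_def by auto
    qed
  qed
  have C: "\<forall>i. Suc i < d \<longrightarrow> x!i < x!Suc i"
  proof (intro allI impI)
    fix i assume i: "Suc i < d"
    show "x!i < x!Suc i"
    proof (cases "i = k")
      case True
      then have "a!Suc i = b!Suc i" using above i by auto
      moreover have "b!k < b!Suc k" using vb i True unfolding valid_def by auto
      ultimately show ?thesis using True xk xi akb by auto
    next
      case False
      then show ?thesis using va i xk xi unfolding valid_def
        by (cases "Suc i = k") auto
    qed
  qed
  have vx: "valid d n x" unfolding valid_def using lx B C by blast
  have ax: "bru_le a x" using lx va xk xi unfolding bru_le_nth valid_def
    by (metis le_add1 order_refl)
  have xb: "bru_le x b" using lx vb xk xi le akb unfolding bru_le_nth valid_def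
    by (metis Suc_eq_plus1 Suc_leI)
  have "\<exists>j<length ch. x = ch!j"
  proof (rule mc_max[OF mc vx])
    fix j assume j: "j < length ch"
    show "bru_le x (ch!j) \<or> bru_le (ch!j) x"
    proof (cases "j \<le> t")
      case True
      then have "bru_le (ch!j) a" using mc_le[OF mc] t a_def by auto
      then show ?thesis using ax bru_le_trans by blast
    next
      case False
      then have "bru_le b (ch!j)" using mc_le[OF mc] j b_def by auto
      then show ?thesis using xb bru_le_trans by blast
    qed
  qed
  then obtain j where j: "j < length ch" "x = ch!j" by blast
  have "x = b"
  proof (cases "j \<le> t")
    case True
    then have "bru_le x a" using mc_le[OF mc] t a_def j by auto
    then have "x = a" using ax bru_le_antisym by blast
    then show ?thesis using xk by auto
  next
    case False
    then have "bru_le b x" using mc_le[OF mc] j b_def by auto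
    then show ?thesis using xb bru_le_antisym by blast
  qed
  then show ?thesis using kd x_def a_def b_def by auto
qed


definition kpos :: "nat \<Rightarrow> nat list list \<Rightarrow> nat \<Rightarrow> nat" where
  "kpos d ch t = (SOME k. k < d \<and> ch!(t+1) = inc (ch!t) k)"

lemma kpos: assumes "max_chain d n ch" "t + 1 < length ch"
  shows "kpos d ch t < d" "ch!(t+1) = inc (ch!t) (kpos d ch t)" "ch!t = dec (ch!(t+1)) (kpos d ch t)"
proof -
  have "\<exists>k. k < d \<and> ch!(t+1) = inc (ch!t) k" using mc_step[OF assms] by blast
  then have "kpos d ch t < d \<and> ch!(t+1) = inc (ch!t) (kpos d ch t)"
    unfolding kpos_def by (rule someI_ex)
  then show "kpos d ch t < d" "ch!(t+1) = inc (ch!t) (kpos d ch t)" "ch!t = dec (ch!(t+1)) (kpos d ch t)"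
    by auto
qed

lemma sum_inc: "k < length xs \<Longrightarrow> sum_list (inc xs k) = sum_list xs + 1"
  unfolding inc_def
  by (simp add: sum_list_update)

lemma mc_sum: assumes "max_chain d n ch" "d \<le> n"
  shows "t < length ch \<Longrightarrow> sum_list (ch!t) = sum_list (bot_el d) + t"
proof (induction t)
  case 0 then show ?case using mc_first[OF assms] by simp
next
  case (Suc t)
  have "length (ch!t) = d" using mc_valid[OF assms(1), of t] Suc.prems unfolding valid_def by auto
  moreover have "ch!(Suc t) = inc (ch!t) (kpos d ch t)" "kpos d ch t < d"
    using kpos[OF assms(1), of t] Suc.prems by auto
  ultimately show ?case using Suc sum_inc by simp
qed

lemma mc_length: assumes "max_chain d n ch" "d \<le> n"
  shows "length ch = Suc (d * (n - d))"
proof -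
  have ne: "ch \<noteq> []" using mc_first[OF assms] by auto
  have "sum_list (ch!(length ch - 1)) = sum_list (bot_el d) + (length ch - 1)"
    using mc_sum[OF assms, of "length ch - 1"] ne by auto
  then show ?thesis using mc_last[OF assms] sum_top[of d n] ne by auto
qed

lemma nth_dec: "q < length y \<Longrightarrow> dec y q ! i = (if i = q then y!q - 1 else y!i)"
  unfolding dec_def by auto
lemma length_dec[simp]: "length (dec y q) = length y"
  unfolding dec_def by auto

lemma o_valid:
  assumes mc: "max_chain d n ch" and j: "1 \<le> j" "j + 1 < length ch"
    and pq: "kpos d ch j \<noteq> kpos d ch (j-1)"
    and nt: "\<not> (kpos d ch (j-1) = Suc (kpos d ch j) \<and> ch!(j+1)!(kpos d ch (j-1)) = Suc (ch!(j+1)!(kpos d ch j)))"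
  shows "valid d n (dec (ch!(j+1)) (kpos d ch (j-1)))"
proof -
  define p q y where "p = kpos d ch j" and "q = kpos d ch (j-1)" and "y = ch!(j+1)"
  have pd: "p < d" and c: "ch!j = dec y p" using kpos(1,3)[OF mc, of j] j p_def y_def by auto
  have qd: "q < d" and a: "ch!(j-1) = dec (ch!j) q" using kpos(1,3)[OF mc, of "j-1"] j q_def by auto
  have vy: "valid d n y" and vc: "valid d n (dec y p)" and va: "valid d n (dec (dec y p) q)"
  proof -
    have "valid d n (ch!(j+1))" "valid d n (ch!j)" "valid d n (ch!(j-1))" using mc_valid[OF mc] j by auto
    then show "valid d n y" "valid d n (dec y p)" "valid d n (dec (dec y p) q)" using y_def c a by auto
  qed
  have ly: "length y = d" using vy valid_def by auto
  have an: "\<And>i. dec (dec y p) q ! i = (if i = q then y!q - 1 else if i = p then y!p - 1 else y!i)"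
    using ly pd qd pq p_def q_def by (auto simp: nth_dec)
  have on: "\<And>i. dec y q ! i = (if i = q then y!q - 1 else y!i)" using ly qd by (auto simp: nth_dec)
  have A: "\<forall>i<d. 1 \<le> dec y q!i \<and> dec y q!i \<le> n"
  proof (intro allI impI)
    fix i assume "i < d"
    then show "1 \<le> dec y q!i \<and> dec y q!i \<le> n"
      using va vy an[of i] on[of i] unfolding valid_def by (cases "i = q") auto
  qed
  have B: "\<forall>i. Suc i < d \<longrightarrow> dec y q!i < dec y q!Suc i"
  proof (intro allI impI)
    fix i assume i: "Suc i < d"
    have yi: "y!i < y!Suc i" using vy i unfolding valid_def by auto
    have ai: "dec (dec y p) q!i < dec (dec y p) q!Suc i" using va i unfolding valid_def by auto
    have a1: "1 \<le> dec (dec y p) q!i" using va i unfolding valid_def by auto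
    show "dec y q!i < dec y q!Suc i"
    proof (cases "i = q")
      case True
      then show ?thesis using ai an[of i] an[of "Suc i"] on[of i] on[of "Suc i"] a1
        by (auto split: if_splits)
    next
      case False
      note iq = False
      show ?thesis
      proof (cases "Suc i = q")
        case True
        show ?thesis
        proof (cases "i = p")
          case True
          then have "y!q \<noteq> Suc (y!p)" using nt \<open>Suc i = q\<close> p_def q_def y_def by auto
          then show ?thesis using yi True \<open>Suc i = q\<close> on[of i] on[of "Suc i"] by auto
        next
          case False
          then show ?thesis using ai an[of i] an[of "Suc i"] on[of i] on[of "Suc i"] iq \<open>Suc i = q\<close>
            by auto
        qed
      next
        case False
        then show ?thesis using yi iq on[of i] on[of "Suc i"] by auto
      qed
    qed
  qed
  show ?thesis unfolding valid_def using A B ly q_def y_def by auto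
qed


lemma diamond:
  assumes mc: "max_chain d n ch" and j: "1 \<le> j" "j + 1 < length ch"
    and pq: "kpos d ch j \<noteq> kpos d ch (j-1)"
    and vo: "valid d n (dec (ch!(j+1)) (kpos d ch (j-1)))"
  shows "has_diamond d n ch j \<and> other_elt d n ch j = dec (ch!(j+1)) (kpos d ch (j-1))"
proof -
  define p q y where "p = kpos d ch j" and "q = kpos d ch (j-1)" and "y = ch!(j+1)"
  have pd: "p < d" and c: "ch!j = dec y p" using kpos(1,3)[OF mc, of j] j p_def y_def by auto
  have qd: "q < d" and a0: "ch!(j-1) = dec (ch!j) q" using kpos(1,3)[OF mc, of "j-1"] j q_def by auto
  have a: "ch!(j-1) = dec (dec y p) q" using a0 c by simp
  have vy: "valid d n y" and vc: "valid d n (dec y p)" and va: "valid d n (dec (dec y p) q)"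
  proof -
    have "valid d n (ch!(j+1))" "valid d n (ch!j)" "valid d n (ch!(j-1))" using mc_valid[OF mc] j by auto
    then show "valid d n y" "valid d n (dec y p)" "valid d n (dec (dec y p) q)" using y_def c a by auto
  qed
  have vo': "valid d n (dec y q)" using vo q_def y_def by simp
  have ly: "length y = d" using vy valid_def by auto
  have an: "\<And>i. dec (dec y p) q ! i = (if i = q then y!q - 1 else if i = p then y!p - 1 else y!i)"
    using ly pd qd pq p_def q_def by (auto simp: nth_dec)
  have cn: "\<And>i. dec y p ! i = (if i = p then y!p - 1 else y!i)" using ly pd by (auto simp: nth_dec)
  have on: "\<And>i. dec y q ! i = (if i = q then y!q - 1 else y!i)" using ly qd by (auto simp: nth_dec)
  have "1 \<le> dec y p ! p" using vc pd unfolding valid_def by auto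
  then have yp: "2 \<le> y!p" using cn[of p] by simp
  have "1 \<le> dec y q ! q" using vo' qd unfolding valid_def by auto
  then have yq: "2 \<le> y!q" using on[of q] by simp
  have pq': "p \<noteq> q" using pq p_def q_def by simp
  let ?a = "dec (dec y p) q" and ?c = "dec y p" and ?o = "dec y q"
  have I: "bru_interval d n ?a y = {?a, ?c, ?o, y}"
  proof
    show "bru_interval d n ?a y \<subseteq> {?a, ?c, ?o, y}"
    proof
      fix x assume "x \<in> bru_interval d n ?a y"
      then have m: "bru_le ?a x" "bru_le x y" unfolding bru_interval_def by auto
      have lx: "length x = d" using m(2) ly unfolding bru_le_nth by simp
      have ax: "\<And>i. i < d \<Longrightarrow> ?a!i \<le> x!i" using m(1) lx unfolding bru_le_nth by simp
      have xy: "\<And>i. i < d \<Longrightarrow> x!i \<le> y!i" using m(2) lx unfolding bru_le_nth by simp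
      have other: "\<And>i. i < d \<Longrightarrow> i \<noteq> p \<Longrightarrow> i \<noteq> q \<Longrightarrow> x!i = y!i"
      proof -
        fix i assume i: "i < d" "i \<noteq> p" "i \<noteq> q"
        then have "?a!i = y!i" using an[of i] by simp
        then show "x!i = y!i" using ax[OF i(1)] xy[OF i(1)] by simp
      qed
      have xp: "x!p = y!p \<or> x!p = y!p - 1" using ax[OF pd] xy[OF pd] an[of p] pq' by auto
      have xq: "x!q = y!q \<or> x!q = y!q - 1" using ax[OF qd] xy[OF qd] an[of q] by auto
      show "x \<in> {?a, ?c, ?o, y}"
      proof (cases "x!p = y!p")
        case True
        show ?thesis
        proof (cases "x!q = y!q")
          case True
          have "x = y" proof (rule nth_equalityI)
            show "length x = length y" using lx ly by simp
          next
            fix i assume "i < length x"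
            then have "i < d" using lx by simp
            then show "x!i = y!i" using \<open>x!p = y!p\<close> True other[of i] pq' by (cases "i = p"; cases "i = q") auto
          qed
          then show ?thesis by simp
        next
          case False
          have "x = ?o" proof (rule nth_equalityI)
            show "length x = length ?o" using lx ly by simp
          next
            fix i assume "i < length x"
            then have "i < d" using lx by simp
            then show "x!i = ?o!i" using \<open>x!p = y!p\<close> xq False on[of i] other[of i] pq' by (cases "i = p"; cases "i = q") auto
          qed
          then show ?thesis by simp
        qed
      next
        case False
        then have xp': "x!p = y!p - 1" using xp by auto
        show ?thesis
        proof (cases "x!q = y!q")
          case True
          have "x = ?c" proof (rule nth_equalityI)
            show "length x = length ?c" using lx ly by simp
          next
            fix i assume "i < length x"
            then have "i < d" using lx by simp
            then show "x!i = ?c!i" using xp' True cn[of i] other[of i] pq' by (cases "i = p"; cases "i = q") auto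
          qed
          then show ?thesis by simp
        next
          case False
          have "x = ?a" proof (rule nth_equalityI)
            show "length x = length ?a" using lx ly by simp
          next
            fix i assume "i < length x"
            then have "i < d" using lx by simp
            then show "x!i = ?a!i" using xp' xq False an[of i] other[of i] pq' by (cases "i = p"; cases "i = q") auto
          qed
          then show ?thesis by simp
        qed
      qed
    qed
  next
    have "bru_le ?a ?c" "bru_le ?a ?o" "bru_le ?a y" "bru_le ?c y" "bru_le ?o y" "bru_le ?a ?a" "bru_le y y"
      unfolding bru_le_nth using an cn on ly by auto
    then show "{?a, ?c, ?o, y} \<subseteq> bru_interval d n ?a y"
      unfolding bru_interval_def Idn_valid using va vc vo' vy by auto
  qed
  have e1: "?a!q \<noteq> ?c!q" "?o!q \<noteq> y!q" using an[of q] cn[of q] on[of q] yq pq' by auto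
  have e2: "?a!p \<noteq> ?o!p" "?a!p \<noteq> y!p" "?c!p \<noteq> ?o!p" "?c!p \<noteq> y!p"
    using an[of p] cn[of p] on[of p] yp pq' by auto
  have dist: "?a \<noteq> ?c" "?a \<noteq> ?o" "?a \<noteq> y" "?c \<noteq> ?o" "?c \<noteq> y" "?o \<noteq> y"
    using e1 e2 by metis+
  have card: "card (bru_interval d n ?a y) = 4" using I dist by auto
  have hd: "has_diamond d n ch j" unfolding has_diamond_def using j card a y_def by simp
  have "other_elt d n ch j = ?o"
    unfolding other_elt_def
  proof (rule the_equality)
    show "?o \<in> bru_interval d n (ch ! (j - 1)) (ch ! (j + 1)) \<and> ?o \<notin> {ch ! (j - 1), ch ! j, ch ! (j + 1)}"
      using I dist a c y_def by auto
  next
    fix x assume "x \<in> bru_interval d n (ch ! (j - 1)) (ch ! (j + 1)) \<and> x \<notin> {ch ! (j - 1), ch ! j, ch ! (j + 1)}"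
    then show "x = ?o" using I a c y_def by auto
  qed
  then show ?thesis using hd q_def y_def by simp
qed


lemma lex_less_iff: "lex_less xs ys \<longleftrightarrow> xs < ys"
  by (simp add: lex_less_def list_less_def)

lemma dec_lex: assumes "p < q" "q < length y" and that: "1 \<le> y!p" shows "dec y p < dec y q"
proof -
  have "take p (dec y p) = take p (dec y q)" using assms by (simp add: dec_def)
  moreover have "dec y p ! p < dec y q ! p" using assms that by (simp add: nth_dec)
  ultimately have "(dec y p, dec y q) \<in> lexord {(u, v). u < v}"
    unfolding lexord_take_index_conv using assms by (auto intro!: exI[of _ p])
  then show ?thesis by (simp add: list_less_def)
qed

lemma y_kpos_pos: assumes mc: "max_chain d n ch" "t + 1 < length ch"
  shows "2 \<le> ch!(t+1)!(kpos d ch t)"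
proof -
  have "valid d n (ch!t)" using mc_valid[OF mc(1)] mc(2) by auto
  then have "1 \<le> ch!t!(kpos d ch t)" using kpos(1)[OF mc] unfolding valid_def by auto
  moreover have "length (ch!(t+1)) = d" using mc_valid[OF mc(1) mc(2)] unfolding valid_def by auto
  ultimately show ?thesis using kpos(1,3)[OF mc] by (simp add: nth_dec)
qed

lemma no_right_step:
  assumes mc: "max_chain d n ch" and j: "1 \<le> j" "j + 1 < length ch"
    and np: "\<not> right_peak d n ch j" and lt: "kpos d ch j < kpos d ch (j-1)"
  shows "kpos d ch (j-1) = Suc (kpos d ch j) \<and> ch!(j+1)!(kpos d ch (j-1)) = Suc (ch!(j+1)!(kpos d ch j))"
proof (rule ccontr)
  assume nt: "\<not> ?thesis"
  have vo: "valid d n (dec (ch!(j+1)) (kpos d ch (j-1)))"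
    using o_valid[OF mc j _ nt] lt by auto
  have D: "has_diamond d n ch j \<and> other_elt d n ch j = dec (ch!(j+1)) (kpos d ch (j-1))"
    using diamond[OF mc j _ vo] lt by auto
  have ly: "length (ch!(j+1)) = d" using mc_valid[OF mc(1) j(2)] unfolding valid_def by auto
  have "ch!j = dec (ch!(j+1)) (kpos d ch j)" using kpos(3)[OF mc j(2)] .
  moreover have "kpos d ch (j-1) < d" using kpos(1)[OF mc, of "j-1"] j by auto
  moreover have "2 \<le> ch!(j+1)!(kpos d ch j)" using y_kpos_pos[OF mc j(2)] .
  ultimately have "ch!j < other_elt d n ch j" using D dec_lex[OF lt] ly by auto
  then have "right_peak d n ch j" using D unfolding right_peak_def lex_less_iff by auto
  then show False using np by auto
qed

lemma no_left_step:
  assumes mc: "max_chain d n ch" and j: "1 \<le> j" "j + 1 < length ch"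
    and np: "\<not> left_peak d n ch j"
  shows "kpos d ch j \<le> kpos d ch (j-1)"
proof (rule ccontr)
  assume "\<not> ?thesis"
  then have lt: "kpos d ch (j-1) < kpos d ch j" by auto
  have vo: "valid d n (dec (ch!(j+1)) (kpos d ch (j-1)))"
    using o_valid[OF mc j] lt by auto
  have D: "has_diamond d n ch j \<and> other_elt d n ch j = dec (ch!(j+1)) (kpos d ch (j-1))"
    using diamond[OF mc j _ vo] lt by auto
  have ly: "length (ch!(j+1)) = d" using mc_valid[OF mc(1) j(2)] unfolding valid_def by auto
  have "ch!j = dec (ch!(j+1)) (kpos d ch j)" using kpos(3)[OF mc j(2)] .
  moreover have "kpos d ch j < d" using kpos(1)[OF mc j(2)] .
  moreover have "valid d n (dec (ch!(j+1)) (kpos d ch (j-1)))" by (rule vo)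
  then have "1 \<le> ch!(j+1)!(kpos d ch (j-1)) - 1" using kpos(1)[OF mc, of "j-1"] j ly
    unfolding valid_def by (auto simp: nth_dec)
  ultimately have "other_elt d n ch j < ch!j" using D dec_lex[OF lt] ly by auto
  then have "left_peak d n ch j" using D unfolding left_peak_def lex_less_iff by auto
  then show False using np by auto
qed

lemma unchanged:
  assumes mc: "max_chain d n ch" and t: "t + 1 < length ch"
  shows "s \<le> t + 1 \<Longrightarrow> (\<forall>i. s \<le> i \<and> i \<le> t \<longrightarrow> kpos d ch i \<noteq> m) \<Longrightarrow> ch!s!m = ch!(t+1)!m"
proof (induction "t + 1 - s" arbitrary: s)
  case 0 then show ?case by auto
next
  case (Suc k)
  then have st: "s \<le> t" by auto
  have "ch!s = dec (ch!(s+1)) (kpos d ch s)" using kpos(3)[OF mc, of s] st t by auto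
  moreover have "kpos d ch s \<noteq> m" using Suc.prems st by auto
  ultimately have "ch!s!m = ch!(s+1)!m" by (simp add: dec_def)
  moreover have "ch!(s+1)!m = ch!(t+1)!m" using Suc st by auto
  ultimately show ?case by simp
qed

lemma ym_big: assumes "valid d n (dec y m)" "m < d" "valid d n y" shows "m + 2 \<le> y!m"
proof -
  have "Suc m \<le> dec y m ! m" using valid_lower[OF assms(1,2)] .
  moreover have "length y = d" using assms(3) valid_def by auto
  ultimately show ?thesis using assms(2) by (simp add: nth_dec)
qed


lemma right_greedy:
  assumes mc: "max_chain d n ch" and dn: "d \<le> n" and np: "\<forall>j. \<not> right_peak d n ch j"
    and t: "t + 1 < length ch" and md: "m < d" and vm: "valid d n (dec (ch!(t+1)) m)"
  shows "m \<le> kpos d ch t"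
proof (rule ccontr)
  assume "\<not> ?thesis"
  then have pm: "kpos d ch t < m" by auto
  define y where "y = ch!(t+1)"
  have vy: "valid d n y" using mc_valid[OF mc t] y_def by auto
  have ym: "m + 2 \<le> y!m" using ym_big[OF _ md vy] vm y_def by auto
  have ch0: "ch!0 = bot_el d" using mc_first[OF mc dn] by auto
  have b0: "ch!0!m = Suc m" using ch0 md by (simp add: bot_el_def)
  define S where "S = {i. i < t \<and> kpos d ch i = m}"
  have "S \<noteq> {}"
  proof
    assume "S = {}"
    then have "\<forall>i. 0 \<le> i \<and> i \<le> t \<longrightarrow> kpos d ch i \<noteq> m" using pm S_def
      by (metis (mono_tags, lifting) empty_Collect_eq le_neq_implies_less less_irrefl)
    then have "ch!0!m = y!m" using unchanged[OF mc t, of 0 m] y_def by auto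
    then show False using b0 ym by auto
  qed
  moreover have fS: "finite S" unfolding S_def by auto
  ultimately have sS: "Max S \<in> S" by auto
  define s where "s = Max S"
  have st: "s < t" and ks: "kpos d ch s = m" using sS s_def S_def by auto
  have nm: "\<And>i. s < i \<Longrightarrow> i \<le> t \<Longrightarrow> kpos d ch i \<noteq> m"
  proof -
    fix i assume i: "s < i" "i \<le> t"
    show "kpos d ch i \<noteq> m"
    proof (cases "i = t")
      case True then show ?thesis using pm by auto
    next
      case False
      then have "i \<notin> S" using Max_ge[OF fS, of i] i s_def by auto
      then show ?thesis using i False S_def by auto
    qed
  qed
  have down: "\<And>k. k \<le> t - s - 1 \<Longrightarrow> kpos d ch (t - k) < m"
  proof -
    fix k show "k \<le> t - s - 1 \<Longrightarrow> kpos d ch (t - k) < m"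
    proof (induction k)
      case 0 then show ?case using pm by simp
    next
      case (Suc k)
      define i where "i = t - k"
      have i1: "1 \<le> i" "i + 1 < length ch" using Suc.prems i_def t by auto
      have im: "i - 1 = t - Suc k" using i_def Suc.prems by auto
      have IH: "kpos d ch i < m" using Suc i_def by auto
      have ne: "kpos d ch (i - 1) \<noteq> m" using nm[of "i - 1"] im Suc.prems by auto
      show ?case
      proof (cases "kpos d ch i < kpos d ch (i - 1)")
        case True
        then have "kpos d ch (i-1) = Suc (kpos d ch i)" using no_right_step[OF mc i1] np by auto
        then show ?thesis using IH ne im by auto
      next
        case False
        then show ?thesis using IH im by auto
      qed
    qed
  qed
  have ks1: "kpos d ch (s+1) < m" using down[of "t - s - 1"] st by (simp add: Suc_diff_Suc)
  have j1: "1 \<le> s + 1" "s + 1 + 1 < length ch" using st t by auto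
  have R: "kpos d ch s = Suc (kpos d ch (s+1)) \<and> ch!(s+2)!(kpos d ch s) = Suc (ch!(s+2)!(kpos d ch (s+1)))"
    using no_right_step[OF mc j1] np ks1 ks by auto
  define z where "z = ch!(s+2)"
  have m1: "kpos d ch (s+1) = m - 1" "1 \<le> m" using R ks by auto
  have zm: "z!m = Suc (z!(m-1))" using R ks m1 z_def by auto
  have "z!m = y!m" using unchanged[OF mc t, of "s+2" m] nm st z_def y_def by auto
  moreover have ly: "length y = d" using vy valid_def by auto
  moreover have "z!(m-1) \<le> y!(m-1)"
  proof -
    have "bru_le z y" using mc_le[OF mc, of "s+2" "t+1"] st t z_def y_def by auto
    then have "\<forall>i<d. z!i \<le> y!i" using ly unfolding bru_le_nth by auto
    then show ?thesis using md by auto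
  qed
  moreover have "dec y m ! (m-1) < dec y m ! m"
  proof -
    have "\<forall>i. Suc i < d \<longrightarrow> dec y m ! i < dec y m ! Suc i" using vm y_def unfolding valid_def by auto
    moreover have "Suc (m-1) = m" using m1 by auto
    ultimately show ?thesis using md by metis
  qed
  ultimately show False using zm md m1 by (auto simp: nth_dec split: if_splits)
qed

lemma left_greedy:
  assumes mc: "max_chain d n ch" and dn: "d \<le> n" and np: "\<forall>j. \<not> left_peak d n ch j"
    and t: "t + 1 < length ch" and md: "m < d" and vm: "valid d n (dec (ch!(t+1)) m)"
  shows "kpos d ch t \<le> m"
proof (rule ccontr)
  assume "\<not> ?thesis"
  then have pm: "m < kpos d ch t" by auto
  define y where "y = ch!(t+1)"
  have vy: "valid d n y" using mc_valid[OF mc t] y_def by auto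
  have ym: "m + 2 \<le> y!m" using ym_big[OF _ md vy] vm y_def by auto
  have ch0: "ch!0 = bot_el d" using mc_first[OF mc dn] by auto
  have b0: "ch!0!m = Suc m" using ch0 md by (simp add: bot_el_def)
  have down: "\<And>k. k \<le> t \<Longrightarrow> m < kpos d ch (t - k)"
  proof -
    fix k show "k \<le> t \<Longrightarrow> m < kpos d ch (t - k)"
    proof (induction k)
      case 0 then show ?case using pm by simp
    next
      case (Suc k)
      define i where "i = t - k"
      have i1: "1 \<le> i" "i + 1 < length ch" using Suc.prems i_def t by auto
      have im: "i - 1 = t - Suc k" using i_def Suc.prems by auto
      have IH: "m < kpos d ch i" using Suc i_def by auto
      have "kpos d ch i \<le> kpos d ch (i-1)" using no_left_step[OF mc i1] np by auto
      then show ?case using IH im by auto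
    qed
  qed
  have "\<forall>i. 0 \<le> i \<and> i \<le> t \<longrightarrow> kpos d ch i \<noteq> m"
  proof (intro allI impI)
    fix i assume "0 \<le> i \<and> i \<le> t"
    then show "kpos d ch i \<noteq> m" using down[of "t - i"] by auto
  qed
  then have "ch!0!m = y!m" using unchanged[OF mc t, of 0 m] y_def by auto
  then show False using b0 ym by auto
qed

definition Dset :: "nat \<Rightarrow> nat \<Rightarrow> nat list \<Rightarrow> nat set" where
  "Dset d n y = {m. m < d \<and> valid d n (dec y m)}"

lemma kpos_Dset: assumes mc: "max_chain d n ch" and t: "t + 1 < length ch"
  shows "kpos d ch t \<in> Dset d n (ch!(t+1))"
  using kpos(1,3)[OF mc t] mc_valid[OF mc, of t] t unfolding Dset_def by auto

lemma greedy_unique: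
  assumes l: "length c1 = L" "length c2 = L" "0 < L" and last: "c1!(L-1) = c2!(L-1)"
    and g1: "\<And>t. t + 1 < L \<Longrightarrow> c1!t = dec (c1!(t+1)) (G (c1!(t+1)))"
    and g2: "\<And>t. t + 1 < L \<Longrightarrow> c2!t = dec (c2!(t+1)) (G (c2!(t+1)))"
  shows "c1 = c2"
proof -
  have "\<And>k. k < L \<Longrightarrow> c1!(L-1-k) = c2!(L-1-k)"
  proof -
    fix k show "k < L \<Longrightarrow> c1!(L-1-k) = c2!(L-1-k)"
    proof (induction k)
      case 0 then show ?case using last by simp
    next
      case (Suc k)
      define t where "t = L - 1 - Suc k"
      have tt: "t + 1 < L" "t + 1 = L - 1 - k" using Suc.prems t_def by auto
      then show ?case using g1[OF tt(1)] g2[OF tt(1)] Suc t_def by auto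
    qed
  qed
  then have "\<And>i. i < L \<Longrightarrow> c1!i = c2!i"
  proof -
    fix i assume i: "i < L"
    then have "L - 1 - (L - 1 - i) = i" "L - 1 - i < L" by auto
    then show "c1!i = c2!i" using \<open>\<And>k. k < L \<Longrightarrow> c1!(L-1-k) = c2!(L-1-k)\<close>[of "L - 1 - i"] by simp
  qed
  then show ?thesis using l by (auto intro: nth_equalityI)
qed


lemma Idn_finite: "finite (Idn d n)"
proof -
  have "Idn d n \<subseteq> {xs. set xs \<subseteq> {1..n} \<and> length xs = d}" unfolding Idn_def by auto
  moreover have "finite {xs. set xs \<subseteq> {1..n} \<and> length xs = d}" by (rule finite_lists_length_eq) auto
  ultimately show ?thesis by (rule finite_subset)
qed

lemma other_props:
  assumes mc: "max_chain d n ch" and hd: "has_diamond d n ch t"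
  shows "bru_interval d n (ch!(t-1)) (ch!(t+1)) - {ch!(t-1), ch!t, ch!(t+1)} = {other_elt d n ch t}"
proof -
  let ?a = "ch!(t-1)" and ?c = "ch!t" and ?b = "ch!(t+1)"
  let ?I = "bru_interval d n ?a ?b"
  have t: "1 \<le> t" "t + 1 < length ch" and c4: "card ?I = 4" using hd unfolding has_diamond_def by auto
  have fI: "finite ?I" unfolding bru_interval_def using Idn_finite by auto
  have ac: "bru_less ?a ?c" using mc_less[OF mc, of "t-1" t] t by auto
  have cb: "bru_less ?c ?b" using mc_less[OF mc, of t "t+1"] t by auto
  have ab: "bru_less ?a ?b" using mc_less[OF mc, of "t-1" "t+1"] t by auto
  have sub: "{?a, ?c, ?b} \<subseteq> ?I"
    using ac cb ab mc t unfolding bru_interval_def bru_less_def max_chain_def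
    by (auto intro: nth_mem)
  have d3: "card {?a, ?c, ?b} = 3" using ac cb ab unfolding bru_less_def by auto
  have "card (?I - {?a, ?c, ?b}) = 1" using card_Diff_subset[OF _ sub] c4 d3 by auto
  then obtain o' where o': "?I - {?a, ?c, ?b} = {o'}" using card_1_singletonE by blast
  have "other_elt d n ch t = o'"
    unfolding other_elt_def
  proof (rule the_equality)
    show "o' \<in> ?I \<and> o' \<notin> {?a, ?c, ?b}" using o' by auto
  next
    fix x assume "x \<in> ?I \<and> x \<notin> {?a, ?c, ?b}"
    then show "x = o'" using o' by auto
  qed
  then show ?thesis using o' by simp
qed

lemma peak_chain:
  assumes mc: "max_chain d n ch" and hd: "has_diamond d n ch t"
  shows "max_chain d n (ch[t := other_elt d n ch t])"
proof -
  let ?a = "ch!(t-1)" and ?c = "ch!t" and ?b = "ch!(t+1)" and ?o = "other_elt d n ch t"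
  let ?I = "bru_interval d n ?a ?b"
  let ?ch = "ch[t := ?o]"
  have t: "1 \<le> t" "t + 1 < length ch" using hd unfolding has_diamond_def by auto
  have O: "?I - {?a, ?c, ?b} = {?o}" by (rule other_props[OF mc hd])
  then have oI: "?o \<in> Idn d n" "bru_le ?a ?o" "bru_le ?o ?b" and ona: "?o \<noteq> ?a" "?o \<noteq> ?c" "?o \<noteq> ?b"
    unfolding bru_interval_def by auto
  have L: "length ?ch = length ch" by simp
  have nth': "\<And>i. ?ch!i = (if i = t then ?o else ch!i)" using t by auto
  have below: "\<And>i. i < t \<Longrightarrow> bru_le (ch!i) ?a" using mc_le[OF mc] t by auto
  have above: "\<And>i. t < i \<Longrightarrow> i < length ch \<Longrightarrow> bru_le ?b (ch!i)" using mc_le[OF mc] t by auto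
  have inc_oc: "\<not> (bru_le ?o ?c \<or> bru_le ?c ?o)"
  proof
    assume cmp: "bru_le ?o ?c \<or> bru_le ?c ?o"
    have "\<exists>j<length ch. ?o = ch!j"
    proof (rule mc_max[OF mc])
      show "valid d n ?o" using oI Idn_valid by auto
    next
      fix j assume j: "j < length ch"
      show "bru_le ?o (ch!j) \<or> bru_le (ch!j) ?o"
      proof (cases "j < t")
        case True then show ?thesis using below[OF True] oI bru_le_trans by blast
      next
        case False
        show ?thesis
        proof (cases "j = t")
          case True then show ?thesis using cmp by auto
        next
          case False
          then have "t < j" using \<open>\<not> j < t\<close> by auto
          then show ?thesis using above[OF _ j] oI bru_le_trans by blast
        qed
      qed
    qed
    then obtain j where j: "j < length ch" "?o = ch!j" by blast
    show False
    proof (cases "j < t")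
      case True
      then have "bru_le ?o ?a" using below j by auto
      then show False using oI ona bru_le_antisym by blast
    next
      case False
      show False
      proof (cases "j = t")
        case True then show False using j ona by auto
      next
        case False
        then have "t < j" using \<open>\<not> j < t\<close> by auto
        then have "bru_le ?b ?o" using above j by auto
        then show False using oI ona bru_le_antisym by blast
      qed
    qed
  qed
  have s1: "set ?ch \<subseteq> Idn d n"
    using mc oI set_update_subset_insert[of ch t ?o] unfolding max_chain_def by auto
  have s2: "sorted_wrt bru_less ?ch"
    unfolding sorted_wrt_iff_nth_less
  proof (intro allI impI)
    fix i j assume ij: "i < j" "j < length ?ch"
    show "bru_less (?ch!i) (?ch!j)"
    proof (cases "i = t")
      case True
      then have "t < j" using ij by auto
      then have "bru_le ?b (ch!j)" using above ij by auto
      then have le: "bru_le ?o (ch!j)" using oI bru_le_trans by blast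
      have "?o \<noteq> ch!j" using le \<open>bru_le ?b (ch!j)\<close> oI ona bru_le_antisym bru_le_trans by metis
      then show ?thesis using le True \<open>t < j\<close> nth' unfolding bru_less_def by auto
    next
      case False
      note it = False
      show ?thesis
      proof (cases "j = t")
        case True
        then have "i < t" using ij by auto
        then have "bru_le (ch!i) ?a" using below by auto
        then have le: "bru_le (ch!i) ?o" using oI bru_le_trans by blast
        have "?o \<noteq> ch!i" using le \<open>bru_le (ch!i) ?a\<close> oI ona bru_le_antisym bru_le_trans by metis
        then show ?thesis using le True it nth' unfolding bru_less_def by auto
      next
        case False
        then show ?thesis using mc_less[OF mc ij(1)] ij it nth' by auto
      qed
    qed
  qed
  have s3: "\<forall>x\<in>Idn d n. (\<forall>y\<in>set ?ch. bru_le x y \<or> bru_le y x) \<longrightarrow> x \<in> set ?ch"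
  proof (intro ballI impI)
    fix x assume xI: "x \<in> Idn d n" and cmp: "\<forall>y\<in>set ?ch. bru_le x y \<or> bru_le y x"
    have cmpi: "\<And>i. i < length ch \<Longrightarrow> i \<noteq> t \<Longrightarrow> bru_le x (ch!i) \<or> bru_le (ch!i) x"
    proof -
      fix i assume "i < length ch" "i \<noteq> t"
      then have "ch!i \<in> set ?ch" using nth' by (metis L nth_mem)
      then show "bru_le x (ch!i) \<or> bru_le (ch!i) x" using cmp by auto
    qed
    have inset: "\<And>i. i < length ch \<Longrightarrow> i \<noteq> t \<Longrightarrow> ch!i \<in> set ?ch"
      using nth' by (metis L nth_mem)
    show "x \<in> set ?ch"
    proof (cases "bru_le x ?c \<or> bru_le ?c x")
      case True
      have "\<exists>j<length ch. x = ch!j"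
      proof (rule mc_max[OF mc])
        show "valid d n x" using xI Idn_valid by auto
      next
        fix j assume "j < length ch"
        then show "bru_le x (ch!j) \<or> bru_le (ch!j) x" using True cmpi by (cases "j = t") auto
      qed
      then obtain j where j: "j < length ch" "x = ch!j" by blast
      have "j \<noteq> t"
      proof
        assume "j = t"
        then have "x = ?c" using j by simp
        moreover have "?o \<in> set ?ch" using t by (simp add: set_update_memI)
        ultimately show False using cmp inc_oc by auto
      qed
      then show ?thesis using inset j by auto
    next
      case False
      have ta: "t - 1 < length ch" "t - 1 \<noteq> t" and tb: "t + 1 < length ch" "t + 1 \<noteq> t" using t by auto
      have "bru_le ?a x"
      proof -
        have "bru_le x ?a \<or> bru_le ?a x" using cmpi[OF ta] .
        moreover have "bru_le ?a ?c" using mc_le[OF mc, of "t-1" t] t by auto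
        ultimately show ?thesis using False bru_le_trans by blast
      qed
      moreover have "bru_le x ?b"
      proof -
        have "bru_le x ?b \<or> bru_le ?b x" using cmpi[OF tb] .
        moreover have "bru_le ?c ?b" using mc_le[OF mc, of t "t+1"] t by auto
        ultimately show ?thesis using False bru_le_trans by blast
      qed
      ultimately have "x \<in> ?I" using xI unfolding bru_interval_def by auto
      moreover have "x \<noteq> ?c" using False by auto
      ultimately have "x = ?a \<or> x = ?b \<or> x = ?o" using O by auto
      moreover have "?o \<in> set ?ch" using t by (simp add: set_update_memI)
      ultimately show ?thesis using inset[OF ta] inset[OF tb] by auto
    qed
  qed
  show ?thesis unfolding max_chain_def using s1 s2 s3 by blast
qed

lemma string_update:
  assumes t: "t < length ch" and uv: "u < v" "length u = length v"
  shows "chain_string (ch[t := u]) < chain_string (ch[t := v])"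
proof -
  have e: "\<And>w. chain_string (ch[t := w]) = concat (rev (drop (Suc t) ch)) @ w @ concat (rev (take t ch))"
    unfolding chain_string_def using t by (simp add: upd_conv_take_nth_drop)
  have "(u, v) \<in> lexord {(a, b). a < b}" using uv by (simp add: list_less_def)
  then have "(u @ concat (rev (take t ch)), v @ concat (rev (take t ch))) \<in> lexord {(a, b). a < b}"
    using uv by (intro lexord_sufI) auto
  then have "(concat (rev (drop (Suc t) ch)) @ u @ concat (rev (take t ch)),
              concat (rev (drop (Suc t) ch)) @ v @ concat (rev (take t ch))) \<in> lexord {(a, b). a < b}"
    by (rule lexord_append_leftI)
  then show ?thesis unfolding e by (simp add: list_less_def)
qed

lemma peak_string:
  assumes mc: "max_chain d n ch" and hd: "has_diamond d n ch t"
  shows "length (other_elt d n ch t) = length (ch!t)"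
proof -
  have O: "bru_interval d n (ch!(t-1)) (ch!(t+1)) - {ch!(t-1), ch!t, ch!(t+1)} = {other_elt d n ch t}"
    by (rule other_props[OF mc hd])
  then have "other_elt d n ch t \<in> Idn d n" unfolding bru_interval_def by auto
  moreover have "ch!t \<in> Idn d n" using mc hd unfolding max_chain_def has_diamond_def by auto
  ultimately show ?thesis unfolding Idn_def by auto
qed

lemma right_peak_up:
  assumes mc: "max_chain d n ch" and rp: "right_peak d n ch t"
  shows "max_chain d n (ch[t := other_elt d n ch t]) \<and> chain_string ch < chain_string (ch[t := other_elt d n ch t])"
proof -
  have hd: "has_diamond d n ch t" and lt: "ch!t < other_elt d n ch t"
    using rp unfolding right_peak_def lex_less_iff by auto
  have tl: "t < length ch" using hd unfolding has_diamond_def by auto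
  have "chain_string (ch[t := ch!t]) < chain_string (ch[t := other_elt d n ch t])"
    using string_update[OF tl lt] peak_string[OF mc hd] by auto
  then show ?thesis using peak_chain[OF mc hd] by simp
qed

lemma left_peak_down:
  assumes mc: "max_chain d n ch" and rp: "left_peak d n ch t"
  shows "max_chain d n (ch[t := other_elt d n ch t]) \<and> chain_string (ch[t := other_elt d n ch t]) < chain_string ch"
proof -
  have hd: "has_diamond d n ch t" and lt: "other_elt d n ch t < ch!t"
    using rp unfolding left_peak_def lex_less_iff by auto
  have tl: "t < length ch" using hd unfolding has_diamond_def by auto
  have "chain_string (ch[t := other_elt d n ch t]) < chain_string (ch[t := ch!t])"
    using string_update[OF tl lt] peak_string[OF mc hd] by auto
  then show ?thesis using peak_chain[OF mc hd] by simp
qed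


lemma concat_inj:
  "0 < d \<Longrightarrow> \<forall>x\<in>set xs. length x = d \<Longrightarrow> \<forall>y\<in>set ys. length y = d \<Longrightarrow> concat xs = concat ys \<Longrightarrow> xs = ys"
proof (induction xs arbitrary: ys)
  case Nil then show ?case by (cases ys) auto
next
  case (Cons x xs)
  show ?case
  proof (cases ys)
    case Nil then show ?thesis using Cons.prems by auto
  next
    case (Cons y ys')
    then have "x @ concat xs = y @ concat ys'" "length x = length y" using Cons.prems by auto
    then have "x = y" "concat xs = concat ys'" by auto
    then show ?thesis using Cons.IH[of ys'] Cons.prems \<open>ys = y # ys'\<close> by auto
  qed
qed

lemma string_inj:
  assumes "0 < d" "max_chain d n c1" "max_chain d n c2" "chain_string c1 = chain_string c2"
  shows "c1 = c2"
proof -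
  have "\<forall>x\<in>set (rev c1). length x = d" "\<forall>x\<in>set (rev c2). length x = d"
    using assms unfolding max_chain_def Idn_def by auto
  then have "rev c1 = rev c2" using concat_inj[OF assms(1)] assms(4) unfolding chain_string_def by blast
  then show ?thesis by simp
qed

lemma MC_finite: assumes "d \<le> n" shows "finite {c. max_chain d n c}"
proof -
  have "{c. max_chain d n c} \<subseteq> {xs. set xs \<subseteq> Idn d n \<and> length xs \<le> Suc (d * (n - d))}"
    using mc_length[OF _ assms] unfolding max_chain_def by auto
  moreover have "finite {xs. set xs \<subseteq> Idn d n \<and> length xs \<le> Suc (d * (n - d))}"
    by (rule finite_lists_length_le[OF Idn_finite])
  ultimately show ?thesis by (rule finite_subset)
qed

lemma C_left_prop:
  assumes d: "0 < d" "d \<le> n" and mc: "max_chain d n ch"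
  shows "max_chain d n (C_left d n) \<and> (\<forall>c'. max_chain d n c' \<and> c' \<noteq> C_left d n \<longrightarrow> chain_string c' < chain_string (C_left d n))"
proof -
  let ?MC = "{c. max_chain d n c}"
  let ?P = "\<lambda>c. max_chain d n c \<and> (\<forall>c'. max_chain d n c' \<and> c' \<noteq> c \<longrightarrow> lex_less (chain_string c') (chain_string c))"
  have f: "finite (chain_string ` ?MC)" using MC_finite[OF d(2)] by auto
  have ne: "chain_string ` ?MC \<noteq> {}" using mc by auto
  obtain c where c: "c \<in> ?MC" "chain_string c = Max (chain_string ` ?MC)"
    using Max_in[OF f ne] by auto
  have Pc: "?P c"
  proof -
    { fix c' assume c': "max_chain d n c'" "c' \<noteq> c"
      then have "chain_string c' \<le> chain_string c" using c Max_ge[OF f] by auto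
      moreover have "chain_string c' \<noteq> chain_string c" using string_inj[OF d(1) c'(1)] c c' by auto
      ultimately have "lex_less (chain_string c') (chain_string c)" unfolding lex_less_iff by auto }
    then show ?thesis using c by auto
  qed
  have "\<exists>!c. ?P c"
  proof (rule ex1I[of _ c])
    show "?P c" by (rule Pc)
  next
    fix c2 assume P2: "?P c2"
    show "c2 = c"
    proof (rule ccontr)
      assume "c2 \<noteq> c"
      then have "lex_less (chain_string c2) (chain_string c)" "lex_less (chain_string c) (chain_string c2)"
        using Pc P2 by auto
      then show False unfolding lex_less_iff by auto
    qed
  qed
  then have "?P (C_left d n)" unfolding C_left_def by (rule theI')
  then show ?thesis unfolding lex_less_iff by auto
qed

lemma C_right_prop:
  assumes d: "0 < d" "d \<le> n" and mc: "max_chain d n ch"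
  shows "max_chain d n (C_right d n) \<and> (\<forall>c'. max_chain d n c' \<and> c' \<noteq> C_right d n \<longrightarrow> chain_string (C_right d n) < chain_string c')"
proof -
  let ?MC = "{c. max_chain d n c}"
  let ?P = "\<lambda>c. max_chain d n c \<and> (\<forall>c'. max_chain d n c' \<and> c' \<noteq> c \<longrightarrow> lex_less (chain_string c) (chain_string c'))"
  have f: "finite (chain_string ` ?MC)" using MC_finite[OF d(2)] by auto
  have ne: "chain_string ` ?MC \<noteq> {}" using mc by auto
  obtain c where c: "c \<in> ?MC" "chain_string c = Min (chain_string ` ?MC)"
    using Min_in[OF f ne] by auto
  have Pc: "?P c"
  proof -
    { fix c' assume c': "max_chain d n c'" "c' \<noteq> c"
      then have "chain_string c \<le> chain_string c'" using c Min_le[OF f] by auto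
      moreover have "chain_string c' \<noteq> chain_string c" using string_inj[OF d(1) c'(1)] c c' by auto
      ultimately have "lex_less (chain_string c) (chain_string c')" unfolding lex_less_iff by auto }
    then show ?thesis using c by auto
  qed
  have "\<exists>!c. ?P c"
  proof (rule ex1I[of _ c])
    show "?P c" by (rule Pc)
  next
    fix c2 assume P2: "?P c2"
    show "c2 = c"
    proof (rule ccontr)
      assume "c2 \<noteq> c"
      then have "lex_less (chain_string c2) (chain_string c)" "lex_less (chain_string c) (chain_string c2)"
        using Pc P2 by auto
      then show False unfolding lex_less_iff by auto
    qed
  qed
  then have "?P (C_right d n)" unfolding C_right_def by (rule theI')
  then show ?thesis unfolding lex_less_iff by auto
qed

lemma right_greedy_eq:
  assumes mc: "max_chain d n ch" and dn: "d \<le> n" and np: "\<forall>j. \<not> right_peak d n ch j"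
    and t: "t + 1 < length ch"
  shows "ch!t = dec (ch!(t+1)) (Max (Dset d n (ch!(t+1))))"
proof -
  have "Max (Dset d n (ch!(t+1))) = kpos d ch t"
  proof (rule Max_eqI)
    show "finite (Dset d n (ch!(t+1)))" unfolding Dset_def by auto
    show "kpos d ch t \<in> Dset d n (ch!(t+1))" by (rule kpos_Dset[OF mc t])
    fix m assume "m \<in> Dset d n (ch!(t+1))"
    then show "m \<le> kpos d ch t" using right_greedy[OF mc dn np t] unfolding Dset_def by auto
  qed
  then show ?thesis using kpos(3)[OF mc t] by simp
qed

lemma left_greedy_eq:
  assumes mc: "max_chain d n ch" and dn: "d \<le> n" and np: "\<forall>j. \<not> left_peak d n ch j"
    and t: "t + 1 < length ch"
  shows "ch!t = dec (ch!(t+1)) (Min (Dset d n (ch!(t+1))))"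
proof -
  have "Min (Dset d n (ch!(t+1))) = kpos d ch t"
  proof (rule Min_eqI)
    show "finite (Dset d n (ch!(t+1)))" unfolding Dset_def by auto
    show "kpos d ch t \<in> Dset d n (ch!(t+1))" by (rule kpos_Dset[OF mc t])
    fix m assume "m \<in> Dset d n (ch!(t+1))"
    then show "kpos d ch t \<le> m" using left_greedy[OF mc dn np t] unfolding Dset_def by auto
  qed
  then show ?thesis using kpos(3)[OF mc t] by simp
qed

lemma right_unique:
  assumes dn: "d \<le> n" and m1: "max_chain d n c1" and m2: "max_chain d n c2"
    and n1: "\<forall>j. \<not> right_peak d n c1 j" and n2: "\<forall>j. \<not> right_peak d n c2 j"
  shows "c1 = c2"
  using greedy_unique[of c1 "Suc (d * (n - d))" c2 "\<lambda>y. Max (Dset d n y)"]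
    mc_length[OF m1 dn] mc_length[OF m2 dn] mc_last[OF m1 dn] mc_last[OF m2 dn]
    right_greedy_eq[OF m1 dn n1] right_greedy_eq[OF m2 dn n2] by auto

lemma left_unique:
  assumes dn: "d \<le> n" and m1: "max_chain d n c1" and m2: "max_chain d n c2"
    and n1: "\<forall>j. \<not> left_peak d n c1 j" and n2: "\<forall>j. \<not> left_peak d n c2 j"
  shows "c1 = c2"
  using greedy_unique[of c1 "Suc (d * (n - d))" c2 "\<lambda>y. Min (Dset d n y)"]
    mc_length[OF m1 dn] mc_length[OF m2 dn] mc_last[OF m1 dn] mc_last[OF m2 dn]
    left_greedy_eq[OF m1 dn n1] left_greedy_eq[OF m2 dn n2] by auto

lemma C_left_nopeak:
  assumes d: "0 < d" "d \<le> n" and mc: "max_chain d n ch"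
  shows "\<forall>j. \<not> right_peak d n (C_left d n) j"
proof (intro allI notI)
  fix j assume rp: "right_peak d n (C_left d n) j"
  have P: "max_chain d n (C_left d n)" "\<forall>c'. max_chain d n c' \<and> c' \<noteq> C_left d n \<longrightarrow> chain_string c' < chain_string (C_left d n)"
    using C_left_prop[OF d mc] by auto
  let ?c = "(C_left d n)[j := other_elt d n (C_left d n) j]"
  have U: "max_chain d n ?c" "chain_string (C_left d n) < chain_string ?c" using right_peak_up[OF P(1) rp] by auto
  then have "?c \<noteq> C_left d n" by auto
  then have "chain_string ?c < chain_string (C_left d n)" using P(2) U(1) by auto
  then show False using U(2) by auto
qed

lemma C_right_nopeak:
  assumes d: "0 < d" "d \<le> n" and mc: "max_chain d n ch"
  shows "\<forall>j. \<not> left_peak d n (C_right d n) j"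
proof (intro allI notI)
  fix j assume rp: "left_peak d n (C_right d n) j"
  have P: "max_chain d n (C_right d n)" "\<forall>c'. max_chain d n c' \<and> c' \<noteq> C_right d n \<longrightarrow> chain_string (C_right d n) < chain_string c'"
    using C_right_prop[OF d mc] by auto
  let ?c = "(C_right d n)[j := other_elt d n (C_right d n) j]"
  have U: "max_chain d n ?c" "chain_string ?c < chain_string (C_right d n)" using left_peak_down[OF P(1) rp] by auto
  then have "?c \<noteq> C_right d n" by auto
  then have "chain_string (C_right d n) < chain_string ?c" using P(2) U(1) by auto
  then show False using U(2) by auto
qed

lemma reach_left:
  assumes d: "0 < d" "d \<le> n"
  shows "max_chain d n ch \<Longrightarrow> \<exists>ts. foldr (F_op d n) ts (Some ch) = Some (C_left d n)"
proof (induction "card {c. max_chain d n c \<and> chain_string ch < chain_string c}" arbitrary: ch rule: less_induct)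
  case less
  note mc = less.prems
  show ?case
  proof (cases "\<forall>j. \<not> right_peak d n ch j")
    case True
    then have "ch = C_left d n"
      using right_unique[OF d(2) mc _ True C_left_nopeak[OF d mc]] C_left_prop[OF d mc] by auto
    then show ?thesis by (intro exI[of _ "[]"]) auto
  next
    case False
    then obtain j where rp: "right_peak d n ch j" by auto
    let ?c = "ch[j := other_elt d n ch j]"
    have U: "max_chain d n ?c" "chain_string ch < chain_string ?c" using right_peak_up[OF mc rp] by auto
    have sub: "{c. max_chain d n c \<and> chain_string ?c < chain_string c} \<subset> {c. max_chain d n c \<and> chain_string ch < chain_string c}"
      using U by auto
    have "card {c. max_chain d n c \<and> chain_string ?c < chain_string c} < card {c. max_chain d n c \<and> chain_string ch < chain_string c}"
      by (rule psubset_card_mono[OF _ sub]) (rule finite_subset[OF _ MC_finite[OF d(2)]], auto)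
    then obtain ts where ts: "foldr (F_op d n) ts (Some ?c) = Some (C_left d n)" using less.hyps U(1) by blast
    have "F_op d n j (Some ch) = Some ?c" using rp by simp
    then have "foldr (F_op d n) (ts @ [j]) (Some ch) = Some (C_left d n)" using ts by simp
    then show ?thesis by blast
  qed
qed

lemma reach_right:
  assumes d: "0 < d" "d \<le> n"
  shows "max_chain d n ch \<Longrightarrow> \<exists>ts. foldr (E_op d n) ts (Some ch) = Some (C_right d n)"
proof (induction "card {c. max_chain d n c \<and> chain_string c < chain_string ch}" arbitrary: ch rule: less_induct)
  case less
  note mc = less.prems
  show ?case
  proof (cases "\<forall>j. \<not> left_peak d n ch j")
    case True
    then have "ch = C_right d n"
      using left_unique[OF d(2) mc _ True C_right_nopeak[OF d mc]] C_right_prop[OF d mc] by auto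
    then show ?thesis by (intro exI[of _ "[]"]) auto
  next
    case False
    then obtain j where rp: "left_peak d n ch j" by auto
    let ?c = "ch[j := other_elt d n ch j]"
    have U: "max_chain d n ?c" "chain_string ?c < chain_string ch" using left_peak_down[OF mc rp] by auto
    have sub: "{c. max_chain d n c \<and> chain_string c < chain_string ?c} \<subset> {c. max_chain d n c \<and> chain_string c < chain_string ch}"
      using U by auto
    have "card {c. max_chain d n c \<and> chain_string c < chain_string ?c} < card {c. max_chain d n c \<and> chain_string c < chain_string ch}"
      by (rule psubset_card_mono[OF _ sub]) (rule finite_subset[OF _ MC_finite[OF d(2)]], auto)
    then obtain ts where ts: "foldr (E_op d n) ts (Some ?c) = Some (C_right d n)" using less.hyps U(1) by blast
    have "E_op d n j (Some ch) = Some ?c" using rp by simp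
    then have "foldr (E_op d n) (ts @ [j]) (Some ch) = Some (C_right d n)" using ts by simp
    then show ?thesis by blast
  qed
qed

theorem corollary2p30:
  fixes d n r :: nat and ch :: "nat list list"
  assumes "1 \<le> d" and "d < n" and "r = d * (n - d)" and "max_chain d n ch"
  shows "((\<forall>t. 1 \<le> t \<and> t \<le> r - 1 \<longrightarrow> F_op d n t (Some ch) = None) \<longrightarrow> ch = C_left d n)
       \<and> (\<exists>ts. foldr (F_op d n) ts (Some ch) = Some (C_left d n))
       \<and> ((\<forall>t. 1 \<le> t \<and> t \<le> r - 1 \<longrightarrow> E_op d n t (Some ch) = None) \<longrightarrow> ch = C_right d n)
       \<and> (\<exists>ts. foldr (E_op d n) ts (Some ch) = Some (C_right d n))"
proof -
  have d: "0 < d" "d \<le> n" using assms by auto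
  note mc = assms(4)
  have L: "length ch = Suc r" using mc_length[OF mc d(2)] assms(3) by simp
  have i: "(\<forall>t. 1 \<le> t \<and> t \<le> r - 1 \<longrightarrow> F_op d n t (Some ch) = None) \<longrightarrow> ch = C_left d n"
  proof
    assume H: "\<forall>t. 1 \<le> t \<and> t \<le> r - 1 \<longrightarrow> F_op d n t (Some ch) = None"
    have "\<forall>j. \<not> right_peak d n ch j"
    proof (intro allI notI)
      fix j assume rp: "right_peak d n ch j"
      then have "1 \<le> j" "j + 1 < length ch" unfolding right_peak_def has_diamond_def by auto
      then have "1 \<le> j \<and> j \<le> r - 1" using L by auto
      then have "F_op d n j (Some ch) = None" using H by auto
      then show False using rp by simp
    qed
    then show "ch = C_left d n"
      using right_unique[OF d(2) mc _ _ C_left_nopeak[OF d mc]] C_left_prop[OF d mc] by auto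
  qed
  have iii: "(\<forall>t. 1 \<le> t \<and> t \<le> r - 1 \<longrightarrow> E_op d n t (Some ch) = None) \<longrightarrow> ch = C_right d n"
  proof
    assume H: "\<forall>t. 1 \<le> t \<and> t \<le> r - 1 \<longrightarrow> E_op d n t (Some ch) = None"
    have "\<forall>j. \<not> left_peak d n ch j"
    proof (intro allI notI)
      fix j assume rp: "left_peak d n ch j"
      then have "1 \<le> j" "j + 1 < length ch" unfolding left_peak_def has_diamond_def by auto
      then have "1 \<le> j \<and> j \<le> r - 1" using L by auto
      then have "E_op d n j (Some ch) = None" using H by auto
      then show False using rp by simp
    qed
    then show "ch = C_right d n"
      using left_unique[OF d(2) mc _ _ C_right_nopeak[OF d mc]] C_right_prop[OF d mc] by auto
  qed
  show ?thesis using i iii reach_left[OF d mc] reach_right[OF d mc] by blast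
qed

end
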